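(* Let $\mathcal{E}=(E,\leq,\sharp)$ be a prime event structure and let $e,e'\in E$ be concurrent, $e\,||\,e'$. Then there exists a configuration $C$ of $\mathcal{E}$ and processes $P_1,P_2,P_3,P_4$ such that $\emptyset\triangleright\textsc{espsi}(\mathcal{E},C)\xrightarrow{\overline{e}e}P_1$, $\emptyset\triangleright P_1\xrightarrow{\overline{e'}e'}P_2$, $\emptyset\triangleright\textsc{espsi}(\mathcal{E},C)\xrightarrow{\overline{e'}e'}P_3$, $\emptyset\triangleright P_3\xrightarrow{\overline{e}e}P_4$, and $P_2=P_4$.
   Context: A prime event structure is a triple $\mathcal{E}=(E,\leq,\sharp)$ where $E$ is a set of events (names from a nominal set), $\leq$ is a partial order on $E$ with $\{d\mid d\leq e\}$ finite for every $e$, and $\sharp$ is an irreflexive symmetric relation on $E$ with conflict heredity ($d\leq e$ and $d\sharp f$ imply $e\sharp f$). Two events are concurrent, $d\,||\,e$, iff none of $d\leq e$, $e\leq d$, $d\sharp e$ holds. A configuration is a finite, conflict-free, downward-closed subset of $E$. Psi-calculus fragment. Processes: assertion processes $(\!|\Psi|\!)$, output prefixes $\overline{M}\langle N\rangle.P$, case processes $\mathbf{case}\ \varphi_1:P_1,\dots,\varphi_n:P_n$, and parallel compositions (also of infinite families). Frames: $\mathcal{F}((\!|\Psi|\!))=\Psi$, $\mathcal{F}(P\mid Q)=\mathcal{F}(P)\otimes\mathcal{F}(Q)$ (composition over all components for families), and the frame of prefixed and case processes is the unit $\mathbf{1}$. Transitions $\Psi\triangleright P\xrightarrow{\alpha}P'$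 are generated by: (Out) if $\Psi\vdash M\leftrightarrow K$ then $\Psi\triangleright\overline{M}\langle N\rangle.P\xrightarrow{\overline{K}N}P$; (Case) if $\Psi\triangleright P_i\xrightarrow{\alpha}P'$ and $\Psi\vdash\varphi_i$ then $\Psi\triangleright\mathbf{case}\ \tilde\varphi:\tilde P\xrightarrow{\alpha}P'$; (Par) if $\Psi\otimes\mathcal{F}(Q)\triangleright P\xrightarrow{\alpha}P'$ then $\Psi\triangleright P\mid Q\xrightarrow{\alpha}P'\mid Q$, symmetrically for $Q$, and for a parallel family one component moves in context $\Psi$ composed with the frames of all other components, the others remaining unchanged. Assertion processes have no transitions. Event-psi instance over $E$: terms are elements of $E$; conditions are pairs $(L,R)$ of subsets of $E$; assertions are subsets of $E$; $\otimes=\cup$; $\mathbf{1}=\emptyset$; entailment: $\Psi\vdash(L,R)$ iff $L\subseteq\Psi$ and $\Psi\cap R=\emptyset$, and $\Psi\vdash a\leftrightarrow b$ iff $a=b$. Translation: $\textsc{espsi}(\mathcal{E},C)=\big|_{e\in E}P_e$ where $P_e=(\!|\{e\}|\!)$ if $e\in C$ and otherwise $P_e=\mathbf{case}\ \varphi_e:\overline{e}\langle e\rangle.(\!|\{e\}|\!)$, with $\varphi_e=(\{d\in E\mid d\leq e,\ d\neq e\},\{d\in E\mid d\sharp e\})$. Processes are compared as $E$-indexed parallel families. The paper writes the transition labelled $\overline{e}e$ simply as $\xrightarrow{e}$. *)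

theory Defs
  imports Main
begin

definition pes :: "'a set \<Rightarrow> ('a \<Rightarrow> 'a \<Rightarrow> bool) \<Rightarrow> ('a \<Rightarrow> 'a \<Rightarrow> bool) \<Rightarrow> bool" where
  "pes E leq confl \<longleftrightarrow>
     (\<forall>d e. leq d e \<longrightarrow> d \<in> E \<and> e \<in> E) \<and>
     (\<forall>d e. confl d e \<longrightarrow> d \<in> E \<and> e \<in> E) \<and>
     (\<forall>e\<in>E. leq e e) \<and>
     (\<forall>d e f. leq d e \<longrightarrow> leq e f \<longrightarrow> leq d f) \<and>
     (\<forall>d e. leq d e \<longrightarrow> leq e d \<longrightarrow> d = e) \<and>
     (\<forall>e\<in>E. finite {d. leq d e}) \<and>
     (\<forall>e. \<not> confl e e) \<and>
     (\<forall>d e. confl d e \<longrightarrow> confl e d) \<and>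
     (\<forall>d e f. leq d e \<longrightarrow> confl d f \<longrightarrow> confl e f)"

definition concurrent :: "('a \<Rightarrow> 'a \<Rightarrow> bool) \<Rightarrow> ('a \<Rightarrow> 'a \<Rightarrow> bool) \<Rightarrow> 'a \<Rightarrow> 'a \<Rightarrow> bool" where
  "concurrent leq confl d e \<longleftrightarrow> \<not> leq d e \<and> \<not> leq e d \<and> \<not> confl d e"

definition configuration :: "'a set \<Rightarrow> ('a \<Rightarrow> 'a \<Rightarrow> bool) \<Rightarrow> ('a \<Rightarrow> 'a \<Rightarrow> bool) \<Rightarrow> 'a set \<Rightarrow> bool" where
  "configuration E leq confl C \<longleftrightarrow>
     C \<subseteq> E \<and> finite C \<and>
     (\<forall>d\<in>C. \<forall>e\<in>C. \<not> confl d e) \<and>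
     (\<forall>e\<in>C. \<forall>d. leq d e \<longrightarrow> d \<in> C)"

text \<open>Terms are events ('a), assertions are sets of events, conditions are pairs (L,R) of
  sets of events.\<close>

datatype 'a proc =
    Assn "'a set"
  | Out 'a 'a "'a proc"
  | Case "(('a set \<times> 'a set) \<times> 'a proc) list"
  | Par "'a proc" "'a proc"
  | Fam "'a set" "'a \<Rightarrow> 'a proc"

primrec frame :: "'a proc \<Rightarrow> 'a set" where
  "frame (Assn \<Psi>) = \<Psi>"
| "frame (Out M N P) = {}"
| "frame (Case cs) = {}"
| "frame (Par P Q) = frame P \<union> frame Q"
| "frame (Fam I f) = (\<Union>i\<in>I. (frame \<circ> f) i)"

definition entails_cond :: "'a set \<Rightarrow> ('a set \<times> 'a set) \<Rightarrow> bool" where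
  "entails_cond \<Psi> \<phi> \<longleftrightarrow> fst \<phi> \<subseteq> \<Psi> \<and> \<Psi> \<inter> snd \<phi> = {}"

definition chan_eq :: "'a set \<Rightarrow> 'a \<Rightarrow> 'a \<Rightarrow> bool" where
  "chan_eq \<Psi> a b \<longleftrightarrow> a = b"

text \<open>Transitions \<Psi> \<triangleright> P --(K,N)--> P', where the label (K,N) is the output K-bar N.\<close>

inductive trans :: "'a set \<Rightarrow> 'a proc \<Rightarrow> 'a \<times> 'a \<Rightarrow> 'a proc \<Rightarrow> bool" where
  OutR: "chan_eq \<Psi> M K \<Longrightarrow> trans \<Psi> (Out M N P) (K, N) P"
| CaseR: "i < length cs \<Longrightarrow> cs ! i = (\<phi>, P) \<Longrightarrow> trans \<Psi> P \<alpha> P' \<Longrightarrow> entails_cond \<Psi> \<phi>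
          \<Longrightarrow> trans \<Psi> (Case cs) \<alpha> P'"
| ParL: "trans (\<Psi> \<union> frame Q) P \<alpha> P' \<Longrightarrow> trans \<Psi> (Par P Q) \<alpha> (Par P' Q)"
| ParR: "trans (\<Psi> \<union> frame P) Q \<alpha> Q' \<Longrightarrow> trans \<Psi> (Par P Q) \<alpha> (Par P Q')"
| FamR: "i \<in> I \<Longrightarrow> trans (\<Psi> \<union> (\<Union>j\<in>I - {i}. frame (f j))) (f i) \<alpha> P'
          \<Longrightarrow> trans \<Psi> (Fam I f) \<alpha> (Fam I (f(i := P')))"

definition precond :: "'a set \<Rightarrow> ('a \<Rightarrow> 'a \<Rightarrow> bool) \<Rightarrow> ('a \<Rightarrow> 'a \<Rightarrow> bool) \<Rightarrow> 'a \<Rightarrow> 'a set \<times> 'a set" where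
  "precond E leq confl e = ({d\<in>E. leq d e \<and> d \<noteq> e}, {d\<in>E. confl d e})"

definition espsi :: "'a set \<Rightarrow> ('a \<Rightarrow> 'a \<Rightarrow> bool) \<Rightarrow> ('a \<Rightarrow> 'a \<Rightarrow> bool) \<Rightarrow> 'a set \<Rightarrow> 'a proc" where
  "espsi E leq confl C =
     Fam E (\<lambda>e. if e \<in> C then Assn {e}
                else Case [(precond E leq confl e, Out e e (Assn {e}))])"

end

theory Submission
  imports Defs
begin

lemma step:
  assumes "i \<in> I" "f i = Case [(\<phi>, Out i i (Assn {i}))]"
    "entails_cond (\<Union>j\<in>I-{i}. frame (f j)) \<phi>"
  shows "trans {} (Fam I f) (i,i) (Fam I (f(i:=Assn{i})))"
proof -
  have "trans ({} \<union> (\<Union>j\<in>I-{i}. frame (f j))) (f i) (i,i) (Assn {i})"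
    unfolding assms(2)
    by (rule CaseR[where i=0]) (auto intro: OutR simp: chan_eq_def assms(3))
  thus ?thesis using assms(1) by (rule FamR[rotated])
qed

theorem mainTheorem3:
  assumes "pes E leq confl"
    and "e \<in> E" and "e' \<in> E"
    and "concurrent leq confl e e'"
  shows "\<exists>C P1 P2 P3 P4. configuration E leq confl C \<and>
           trans {} (espsi E leq confl C) (e, e) P1 \<and>
           trans {} P1 (e', e') P2 \<and>
           trans {} (espsi E leq confl C) (e', e') P3 \<and>
           trans {} P3 (e, e) P4 \<and>
           P2 = P4"
proof -
  note P = assms(1)[unfolded pes_def]
  note cc = assms(4)[unfolded concurrent_def]
  define C where "C = {d. leq d e \<and> d \<noteq> e} \<union> {d. leq d e' \<and> d \<noteq> e'}"
  have ne: "e \<noteq> e'" using cc P assms(2) by blast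
  have eC: "e \<notin> C" using cc P unfolding C_def by blast
  have e'C: "e' \<notin> C" using cc P unfolding C_def by blast
  have CE: "C \<subseteq> E" using P unfolding C_def by blast
  have sym: "\<And>a b. confl a b \<Longrightarrow> confl b a" using P by blast
  have her: "\<And>a b c. leq a b \<Longrightarrow> confl a c \<Longrightarrow> confl b c" using P by blast
  have irr: "\<And>a. \<not> confl a a" using P by blast
  have tr: "\<And>a b c. leq a b \<Longrightarrow> leq b c \<Longrightarrow> leq a c" using P by blast
  have ee: "\<not> confl a b" if "a \<in> {e,e'}" "b \<in> {e,e'}" for a b
    using that irr cc sym by auto
  have below: "\<exists>a\<in>{e,e'}. leq d a" if "d \<in> C" for d
    using that unfolding C_def by auto
  have noconf: "\<not> confl d x" if dC: "d \<in> C" and xe: "x \<in> {e,e'}" for d x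
  proof
    assume c: "confl d x"
    obtain a where a: "a \<in> {e,e'}" "leq d a" using below[OF dC] by blast
    show False using her[OF a(2) c] ee[OF a(1) xe] by blast
  qed
  have conf: "configuration E leq confl C"
    unfolding configuration_def
  proof (intro conjI ballI allI impI)
    show "C \<subseteq> E" by (rule CE)
    have f1: "finite {d. leq d e}" "finite {d. leq d e'}" using P assms(2,3) by auto
    show "finite C" unfolding C_def
      by (rule finite_Un[THEN iffD2], rule conjI; rule finite_subset[OF _ f1(1)] finite_subset[OF _ f1(2)]; auto)
    fix d x assume d: "d \<in> C" and x: "x \<in> C"
    show "\<not> confl d x"
    proof
      assume c: "confl d x"
      obtain b where b: "b \<in> {e,e'}" "leq x b" using below[OF x] by blast
      have "confl d b" using sym[OF her[OF b(2) sym[OF c]]] .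
      thus False using noconf[OF d b(1)] by blast
    qed
  next
    fix x d assume "x \<in> C" "leq d x"
    thus "d \<in> C" unfolding C_def using tr P by (smt (verit) UnCI UnE mem_Collect_eq)
  qed
  define f where "f = (\<lambda>x. if x \<in> C then Assn {x}
                else Case [(precond E leq confl x, Out x x (Assn {x}))])"
  have fr: "(\<Union>j\<in>E-{i}. frame (g j)) \<subseteq> C \<union> A"
    if "\<forall>j. j \<notin> A \<longrightarrow> g j = f j" "\<forall>j\<in>A. frame (g j) \<subseteq> A" for g A i
  proof
    fix x assume "x \<in> (\<Union>j\<in>E-{i}. frame (g j))"
    then obtain j where j: "j \<in> E" "x \<in> frame (g j)" by auto
    show "x \<in> C \<union> A"
    proof (cases "j \<in> A")
      case True thus ?thesis using that j by auto
    next
      case False thus ?thesis using that j by (auto simp: f_def split: if_splits)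
    qed
  qed
  have fr2: "C - {i} \<subseteq> (\<Union>j\<in>E-{i}. frame (g j))"
    if "\<forall>j. j \<notin> A \<longrightarrow> g j = f j" "A \<inter> C = {}" for g A i
  proof
    fix x assume x: "x \<in> C - {i}"
    hence "x \<notin> A" using that by auto
    hence "g x = Assn {x}" using that x by (auto simp: f_def)
    thus "x \<in> (\<Union>j\<in>E-{i}. frame (g j))" using x CE by force
  qed
  have ent: "entails_cond (\<Union>j\<in>E-{x}. frame (g j)) (precond E leq confl x)"
    if "x \<in> {e,e'}" "\<forall>j. j \<notin> A \<longrightarrow> g j = f j" "\<forall>j\<in>A. frame (g j) \<subseteq> A"
       "A \<subseteq> {e,e'} - {x}" for g A x
  proof -
    have AC: "A \<inter> C = {}" using that eC e'C by auto
    have "{d\<in>E. leq d x \<and> d \<noteq> x} \<subseteq> C - {x}" using that unfolding C_def by auto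
    moreover have "(C \<union> A) \<inter> {d\<in>E. confl d x} = {}"
    proof -
      have "\<not> confl d x" if "d \<in> C \<union> A" for d
        using that noconf[of d x] ee[of d x] \<open>x \<in> {e,e'}\<close> \<open>A \<subseteq> {e,e'} - {x}\<close> by blast
      thus ?thesis by blast
    qed
    ultimately show ?thesis unfolding entails_cond_def precond_def
      using fr[OF that(2,3), of x] fr2[OF that(2) AC, of x] by auto
  qed
  have fe: "f e = Case [(precond E leq confl e, Out e e (Assn {e}))]" using eC by (simp add: f_def)
  have fe': "f e' = Case [(precond E leq confl e', Out e' e' (Assn {e'}))]" using e'C by (simp add: f_def)
  have s1: "trans {} (Fam E f) (e,e) (Fam E (f(e:=Assn{e})))"
    by (rule step[OF assms(2) fe ent[of e "{}" f]]) auto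
  have s2: "trans {} (Fam E (f(e:=Assn{e}))) (e',e') (Fam E (f(e:=Assn{e}, e':=Assn{e'})))"
  proof (rule step[OF assms(3)])
    show "(f(e:=Assn{e})) e' = Case [(precond E leq confl e', Out e' e' (Assn {e'}))]" using ne fe' by simp
    show "entails_cond (\<Union>j\<in>E-{e'}. frame ((f(e:=Assn{e})) j)) (precond E leq confl e')"
      by (rule ent[of e' "{e}"]) (use ne in auto)
  qed
  have s3: "trans {} (Fam E f) (e',e') (Fam E (f(e':=Assn{e'})))"
    by (rule step[OF assms(3) fe' ent[of e' "{}" f]]) auto
  have s4: "trans {} (Fam E (f(e':=Assn{e'}))) (e,e) (Fam E (f(e':=Assn{e'}, e:=Assn{e})))"
  proof (rule step[OF assms(2)])
    show "(f(e':=Assn{e'})) e = Case [(precond E leq confl e, Out e e (Assn {e}))]" using ne fe by simp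
    show "entails_cond (\<Union>j\<in>E-{e}. frame ((f(e':=Assn{e'})) j)) (precond E leq confl e)"
      by (rule ent[of e "{e'}"]) (use ne in auto)
  qed
  have eq: "f(e:=Assn{e}, e':=Assn{e'}) = f(e':=Assn{e'}, e:=Assn{e})"
    using ne by (rule fun_upd_twist)
  have esp: "espsi E leq confl C = Fam E f" unfolding espsi_def f_def by simp
  show ?thesis
    apply (rule exI[of _ C])
    unfolding esp
    using conf s1 s2 s3 s4 eq by metis
qed

end
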